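(* For real numbers $t_1,t_2,t_3$, let $$\rho_{AB}=\tfrac18\,\mathbb{1}_2\otimes\mathbb{1}_4+\tfrac14\big(t_1\,\sigma_1\otimes\lambda_1+t_2\,\sigma_2\otimes\lambda_{13}+t_3\,\sigma_3\otimes\lambda_3\big).$$ Suppose there exist nonzero real numbers $\alpha_1,\alpha_2,\alpha_3$ with $$\alpha_1^2+\alpha_2^2+\alpha_3^2\le1,\qquad \frac{t_1^2}{\alpha_1^2}+\frac{t_3^2}{\alpha_3^2}\le\frac14,\qquad \frac{t_2^2}{\alpha_2^2}\le\frac14 .$$ Then $\rho_{AB}$ is a separable state. Explicitly, put $\beta_\mu=t_\mu/\alpha_\mu$ and define four sign patterns $$\vec\epsilon^{(1)}=(1,-1,-1),\quad \vec\epsilon^{(2)}=(-1,-1,1),\quad \vec\epsilon^{(3)}=(-1,1,-1),\quad \vec\epsilon^{(4)}=(1,1,1).$$ Then $\rho_{AB}=\sum_{i=1}^4\frac14\,\rho_i^{(A)}\otimes\rho_i^{(B)}$, where $$\rho_i^{(A)}=\tfrac12\mathbb{1}+\tfrac12\big(\epsilon^{(i)}_1\alpha_1\sigma_1+\epsilon^{(i)}_2\alpha_2\sigma_2+\epsilon^{(i)}_3\alpha_3\sigma_3\big),$$ $$\rho_i^{(B)}=\tfrac14\mathbb{1}+\tfrac12\big(\epsilon^{(i)}_1\beta_1\lambda_1+\epsilon^{(i)}_2\beta_2\lambda_{13}+\epsilon^{(i)}_3\beta_3\lambda_3\big),$$ and all of these are density matrices.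
   Context: $\sigma_1,\sigma_2,\sigma_3$ are the Pauli matrices. With $\{|1\rangle,|2\rangle,|3\rangle,|4\rangle\}$ the standard basis of $\mathbb{C}^4$, the SU(4) generalized Gell-Mann matrices used here are: - $\lambda_1=|1\rangle\langle2|+|2\rangle\langle1|$, - $\lambda_3=|1\rangle\langle1|-|2\rangle\langle2|$, - $\lambda_{13}=|3\rangle\langle4|+|4\rangle\langle3|$. A state is separable if it is a convex combination of tensor products of density matrices. *)

theory Defs
  imports Complex_Main "Jordan_Normal_Form.Matrix"
begin

definition mat_trace :: "complex mat \<Rightarrow> complex" where
  "mat_trace A = (\<Sum>i<dim_row A. A $$ (i, i))"

definition hermitian :: "complex mat \<Rightarrow> bool" where
  "hermitian A \<longleftrightarrow> dim_row A = dim_col A \<and>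
     (\<forall>i<dim_row A. \<forall>j<dim_col A. A $$ (j, i) = cnj (A $$ (i, j)))"

text \<open>Positive semidefinite: the Hermitian form v^* A v is nonnegative (it is real for
  Hermitian A).\<close>
definition positive_semidef :: "complex mat \<Rightarrow> bool" where
  "positive_semidef A \<longleftrightarrow> hermitian A \<and>
     (\<forall>v \<in> carrier_vec (dim_row A).
        0 \<le> Re (\<Sum>i<dim_row A. \<Sum>j<dim_row A. cnj (v $ i) * A $$ (i, j) * v $ j))"

definition density_matrix :: "nat \<Rightarrow> complex mat \<Rightarrow> bool" where
  "density_matrix n A \<longleftrightarrow> A \<in> carrier_mat n n \<and> positive_semidef A \<and> mat_trace A = 1"

text \<open>Kronecker (tensor) product: (A \<otimes> B)_{(i,k),(j,l)} = A_{ij} B_{kl}, with the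
  composite index (i,k) encoded as i * dim B + k.\<close>
definition kron :: "complex mat \<Rightarrow> complex mat \<Rightarrow> complex mat" where
  "kron A B = mat (dim_row A * dim_row B) (dim_col A * dim_col B)
     (\<lambda>(r, c). A $$ (r div dim_row B, c div dim_col B) * B $$ (r mod dim_row B, c mod dim_col B))"

definition separable :: "nat \<Rightarrow> nat \<Rightarrow> complex mat \<Rightarrow> bool" where
  "separable n m \<rho> \<longleftrightarrow>
     (\<exists>(k::nat) (p::nat \<Rightarrow> real) (A::nat \<Rightarrow> complex mat) (B::nat \<Rightarrow> complex mat).
        (\<forall>i<k. 0 \<le> p i \<and> density_matrix n (A i) \<and> density_matrix m (B i)) \<and>
        (\<Sum>i<k. p i) = 1 \<and>
        \<rho> = mat (n * m) (n * m) (\<lambda>rc. \<Sum>i<k. complex_of_real (p i) * kron (A i) (B i) $$ rc))"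

definition sigma1 :: "complex mat" where
  "sigma1 = mat_of_rows_list 2 [[0, 1], [1, 0]]"
definition sigma2 :: "complex mat" where
  "sigma2 = mat_of_rows_list 2 [[0, -\<i>], [\<i>, 0]]"
definition sigma3 :: "complex mat" where
  "sigma3 = mat_of_rows_list 2 [[1, 0], [0, -1]]"

definition lambda1 :: "complex mat" where
  "lambda1 = mat_of_rows_list 4 [[0,1,0,0],[1,0,0,0],[0,0,0,0],[0,0,0,0]]"
definition lambda3 :: "complex mat" where
  "lambda3 = mat_of_rows_list 4 [[1,0,0,0],[0,-1,0,0],[0,0,0,0],[0,0,0,0]]"
definition lambda13 :: "complex mat" where
  "lambda13 = mat_of_rows_list 4 [[0,0,0,0],[0,0,0,0],[0,0,0,1],[0,0,1,0]]"

definition rhoAB :: "real \<Rightarrow> real \<Rightarrow> real \<Rightarrow> complex mat" where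
  "rhoAB t1 t2 t3 =
     (1/8 :: complex) \<cdot>\<^sub>m kron (1\<^sub>m 2) (1\<^sub>m 4) +
     (1/4 :: complex) \<cdot>\<^sub>m
       (complex_of_real t1 \<cdot>\<^sub>m kron sigma1 lambda1 +
        complex_of_real t2 \<cdot>\<^sub>m kron sigma2 lambda13 +
        complex_of_real t3 \<cdot>\<^sub>m kron sigma3 lambda3)"

end

theory Submission
  imports Defs
begin

lemma re_bound: "- (cmod x * cmod z * cmod y) \<le> Re (cnj x * z * y)"
proof -
  have "\<bar>Re (cnj x * z * y)\<bar> \<le> cmod (cnj x * z * y)" by (rule abs_Re_le_cmod)
  also have "\<dots> = cmod x * cmod z * cmod y" by (simp add: norm_mult)
  finally show ?thesis by linarith
qed

lemma quad_real:
  fixes p q c X Y :: real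
  assumes "p \<ge> 0" "q \<ge> 0" "c \<ge> 0" "c^2 \<le> p*q"
  shows "0 \<le> p*X^2 + q*Y^2 - 2*c*\<bar>X\<bar>*\<bar>Y\<bar>"
proof -
  have "c \<le> sqrt p * sqrt q"
    using assms by (metis real_sqrt_le_iff real_sqrt_mult real_sqrt_pow2 sqrt_le_D abs_of_nonneg real_sqrt_abs)
  hence "2*c*\<bar>X\<bar>*\<bar>Y\<bar> \<le> 2*(sqrt p * sqrt q)*\<bar>X\<bar>*\<bar>Y\<bar>"
    by (simp add: mult_right_mono)
  moreover have "0 \<le> (sqrt p * \<bar>X\<bar> - sqrt q * \<bar>Y\<bar>)^2" by simp
  moreover have "(sqrt p * \<bar>X\<bar> - sqrt q * \<bar>Y\<bar>)^2 = p*X^2 + q*Y^2 - 2*(sqrt p * sqrt q)*\<bar>X\<bar>*\<bar>Y\<bar>"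
    using assms by (simp add: power2_eq_square algebra_simps)
  ultimately show ?thesis by linarith
qed

lemma form2:
  fixes p q :: real and z x y :: complex
  assumes "p \<ge> 0" "q \<ge> 0" "(cmod z)^2 \<le> p*q"
  shows "0 \<le> Re (cnj x * of_real p * x + cnj x * z * y + (cnj y * cnj z * x + cnj y * of_real q * y))"
proof -
  have e1: "Re (cnj x * of_real p * x) = p * (cmod x)^2"
    using cmod_power2[of x] by (simp add: complex_mult_cnj power2_eq_square algebra_simps)
  have e2: "Re (cnj y * of_real q * y) = q * (cmod y)^2"
    using cmod_power2[of y] by (simp add: power2_eq_square algebra_simps)
  have e3: "Re (cnj y * cnj z * x) = Re (cnj x * z * y)"
    by (simp add: algebra_simps)
  have "0 \<le> p*(cmod x)^2 + q*(cmod y)^2 - 2*(cmod z)*\<bar>cmod x\<bar>*\<bar>cmod y\<bar>"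
    using quad_real[OF assms(1,2) norm_ge_zero assms(3)] by blast
  hence q: "2*(cmod x * cmod z * cmod y) \<le> p*(cmod x)^2 + q*(cmod y)^2" by (simp add: mult_ac)
  have "Re (cnj x * of_real p * x + cnj x * z * y + (cnj y * cnj z * x + cnj y * of_real q * y))
     = Re (cnj x * of_real p * x) + Re (cnj x * z * y) + (Re (cnj y * cnj z * x) + Re (cnj y * of_real q * y))"
    by (simp only: plus_complex.sel)
  then show ?thesis using e1 e2 e3 re_bound[of x z y] q by linarith
qed

definition M2 :: "real \<Rightarrow> real \<Rightarrow> complex \<Rightarrow> complex mat" where
  "M2 p q z = mat_of_rows_list 2 [[of_real p, z],[cnj z, of_real q]]"

definition M4 :: "real \<Rightarrow> real \<Rightarrow> complex \<Rightarrow> real \<Rightarrow> real \<Rightarrow> complex \<Rightarrow> complex mat" where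
  "M4 p q z p' q' z' = mat_of_rows_list 4 [[of_real p, z, 0, 0],[cnj z, of_real q, 0, 0],
      [0, 0, of_real p', z'],[0, 0, cnj z', of_real q']]"

lemma lt2: "{..<2::nat} = {0,1}" by auto
lemma lt4: "{..<4::nat} = {0,1,2,3}" by auto
lemma lt8: "{..<8::nat} = {0,1,2,3,4,5,6,7}" by auto

lemma M2_carrier: "M2 p q z \<in> carrier_mat 2 2" unfolding M2_def mat_of_rows_list_def
  by (simp only: list.size) (simp add: numeral_2_eq_2)
lemma M4_carrier: "M4 p q z p' q' z' \<in> carrier_mat 4 4" unfolding M4_def mat_of_rows_list_def
  by (simp only: list.size) (simp add: numeral_eq_Suc)

lemma psd2: assumes "p \<ge> 0" "q \<ge> 0" "(cmod z)^2 \<le> p*q"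
  shows "positive_semidef (M2 p q z)"
  unfolding positive_semidef_def hermitian_def
proof (intro conjI ballI)
  show "dim_row (M2 p q z) = dim_col (M2 p q z)" using M2_carrier[of p q z] by (metis carrier_matD)
  show "\<forall>i<dim_row (M2 p q z). \<forall>j<dim_col (M2 p q z). M2 p q z $$ (j, i) = cnj (M2 p q z $$ (i, j))"
    by (auto simp: M2_def mat_of_rows_list_def less_Suc_eq numeral_2_eq_2)
  fix v :: "complex vec"
  have "(\<Sum>i<dim_row (M2 p q z). \<Sum>j<dim_row (M2 p q z). cnj (v $ i) * M2 p q z $$ (i, j) * v $ j)
     = cnj (v$0) * of_real p * (v$0) + cnj (v$0) * z * (v$1) + (cnj (v$1) * cnj z * (v$0) + cnj (v$1) * of_real q * (v$1))"
    by (simp add: M2_def mat_of_rows_list_def lt2)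
  note eq = this
  show "0 \<le> Re (\<Sum>i<dim_row (M2 p q z). \<Sum>j<dim_row (M2 p q z). cnj (v $ i) * M2 p q z $$ (i, j) * v $ j)"
    using form2[OF assms, of "v$0" "v$1"] unfolding eq .
qed

lemma psd4: assumes "p \<ge> 0" "q \<ge> 0" "(cmod z)^2 \<le> p*q" "p' \<ge> 0" "q' \<ge> 0" "(cmod z')^2 \<le> p'*q'"
  shows "positive_semidef (M4 p q z p' q' z')"
  unfolding positive_semidef_def hermitian_def
proof (intro conjI ballI)
  show "dim_row (M4 p q z p' q' z') = dim_col (M4 p q z p' q' z')" using M4_carrier[of p q z p' q' z'] by (metis carrier_matD)
  show "\<forall>i<dim_row (M4 p q z p' q' z'). \<forall>j<dim_col (M4 p q z p' q' z'). M4 p q z p' q' z' $$ (j, i) = cnj (M4 p q z p' q' z' $$ (i, j))"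
    by (auto simp: M4_def mat_of_rows_list_def less_Suc_eq numeral_eq_Suc)
  fix v :: "complex vec"
  have "(\<Sum>i<dim_row (M4 p q z p' q' z'). \<Sum>j<dim_row (M4 p q z p' q' z'). cnj (v $ i) * M4 p q z p' q' z' $$ (i, j) * v $ j)
     = (cnj (v$0) * of_real p * (v$0) + cnj (v$0) * z * (v$1) + (cnj (v$1) * cnj z * (v$0) + cnj (v$1) * of_real q * (v$1)))
     + (cnj (v$2) * of_real p' * (v$2) + cnj (v$2) * z' * (v$3) + (cnj (v$3) * cnj z' * (v$2) + cnj (v$3) * of_real q' * (v$3)))"
    by (simp add: M4_def mat_of_rows_list_def lt4) (simp only: numeral_2_eq_2 numeral_3_eq_3)
  note eq = this
  show "0 \<le> Re (\<Sum>i<dim_row (M4 p q z p' q' z'). \<Sum>j<dim_row (M4 p q z p' q' z'). cnj (v $ i) * M4 p q z p' q' z' $$ (i, j) * v $ j)"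
    using add_nonneg_nonneg[OF form2[OF assms(1-3), of "v$0" "v$1"] form2[OF assms(4-6), of "v$2" "v$3"]]
    by (simp only: eq plus_complex.sel)
qed

lemma tr2: "mat_trace (M2 p q z) = of_real (p+q)"
  by (simp add: mat_trace_def M2_def mat_of_rows_list_def lt2)
lemma tr4: "mat_trace (M4 p q z p' q' z') = of_real (p+q+p'+q')"
  by (simp add: mat_trace_def M4_def mat_of_rows_list_def lt4)

lemma cmod_Complex_sq: "(cmod (Complex x y))^2 = x^2 + y^2"
  by (simp add: cmod_power2)

lemma densA: fixes x1 x2 x3 :: real assumes "x1^2 + x2^2 + x3^2 \<le> 1"
  shows "density_matrix 2 (M2 ((1+x3)/2) ((1-x3)/2) (Complex (x1/2) (-(x2/2))))"
proof -
  have "x3^2 \<le> 1" using assms zero_le_power2[of x1] zero_le_power2[of x2] by linarith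
  hence "\<bar>x3\<bar> \<le> 1" by (simp add: abs_square_le_1)
  moreover have "(cmod (Complex (x1/2) (-(x2/2))))^2 \<le> (1+x3)/2 * ((1-x3)/2)"
    unfolding cmod_Complex_sq using assms by (simp add: power2_eq_square field_simps)
  ultimately show ?thesis unfolding density_matrix_def
    by (auto simp: M2_carrier tr2 intro!: psd2) (simp add: field_simps)
qed

lemma densB: fixes y1 y2 y3 :: real assumes "y1^2 + y3^2 \<le> 1/4" "y2^2 \<le> 1/4"
  shows "density_matrix 4 (M4 (1/4 + y3/2) (1/4 - y3/2) (Complex (y1/2) 0) (1/4) (1/4) (Complex (y2/2) 0))"
proof -
  have "(2*y3)^2 \<le> 1" using assms zero_le_power2[of y1] by (simp add: power_mult_distrib, linarith)
  hence "\<bar>2*y3\<bar> \<le> 1" by (simp only: abs_square_le_1)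
  moreover have "(2*y2)^2 \<le> 1" using assms by (simp add: power_mult_distrib)
  hence "\<bar>2*y2\<bar> \<le> 1" by (simp only: abs_square_le_1)
  moreover have c1: "(cmod (Complex (y1/2) 0))^2 \<le> (1/4 + y3/2) * (1/4 - y3/2)"
    unfolding cmod_Complex_sq using assms by (simp add: power2_eq_square field_simps)
  moreover have c2: "(cmod (Complex (y2/2) 0))^2 \<le> (1/4) * (1/4::real)"
    unfolding cmod_Complex_sq using assms by (simp add: power2_eq_square field_simps)
  ultimately have a: "0 \<le> 1/4 + y3/2" "0 \<le> 1/4 - y3/2" by (simp_all add: abs_le_iff)
  have "positive_semidef (M4 (1/4 + y3/2) (1/4 - y3/2) (Complex (y1/2) 0) (1/4) (1/4) (Complex (y2/2) 0))"
    using psd4[OF a c1 _ _ c2] by simp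
  moreover have "mat_trace (M4 (1/4 + y3/2) (1/4 - y3/2) (Complex (y1/2) 0) (1/4) (1/4) (Complex (y2/2) 0)) = 1"
    unfolding tr4 by simp
  ultimately show ?thesis unfolding density_matrix_def using M4_carrier by blast
qed

definition e1 :: "nat \<Rightarrow> real" where "e1 i = [1,-1,-1,1]!i"
definition e2 :: "nat \<Rightarrow> real" where "e2 i = [-1,-1,1,1]!i"
definition e3 :: "nat \<Rightarrow> real" where "e3 i = [-1,1,-1,1]!i"

definition AA :: "real \<Rightarrow> real \<Rightarrow> real \<Rightarrow> nat \<Rightarrow> complex mat" where
  "AA a1 a2 a3 i = M2 ((1+e3 i*a3)/2) ((1-e3 i*a3)/2) (Complex (e1 i*a1/2) (-(e2 i*a2/2)))"
definition BB :: "real \<Rightarrow> real \<Rightarrow> real \<Rightarrow> nat \<Rightarrow> complex mat" where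
  "BB b1 b2 b3 i = M4 (1/4 + e3 i*b3/2) (1/4 - e3 i*b3/2) (Complex (e1 i*b1/2) 0) (1/4) (1/4) (Complex (e2 i*b2/2) 0)"

lemma kron_idx: assumes "A \<in> carrier_mat 2 2" "B \<in> carrier_mat 4 4" "r < 8" "c < 8"
  shows "kron A B $$ (r,c) = A $$ (r div 4, c div 4) * B $$ (r mod 4, c mod 4)"
  using assms by (simp add: kron_def)

lemma s_carrier: "sigma1 \<in> carrier_mat 2 2" "sigma2 \<in> carrier_mat 2 2" "sigma3 \<in> carrier_mat 2 2"
  "lambda1 \<in> carrier_mat 4 4" "lambda3 \<in> carrier_mat 4 4" "lambda13 \<in> carrier_mat 4 4"
  unfolding sigma1_def sigma2_def sigma3_def lambda1_def lambda3_def lambda13_def mat_of_rows_list_def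
  by (simp_all only: list.size) (simp_all add: numeral_eq_Suc)

lemma AB_carrier: "AA a1 a2 a3 n \<in> carrier_mat 2 2" "BB b1 b2 b3 n \<in> carrier_mat 4 4"
  by (simp_all add: AA_def BB_def M2_carrier M4_carrier)

lemma key: assumes "i < 2" "j < 2" "k < 4" "l < 4"
  shows "1/8 * (1\<^sub>m 2 $$ (i,j) * 1\<^sub>m 4 $$ (k,l)) + 1/4 * (complex_of_real (a1*b1) * (sigma1 $$ (i,j) * lambda1 $$ (k,l))
     + complex_of_real (a2*b2) * (sigma2 $$ (i,j) * lambda13 $$ (k,l))
     + complex_of_real (a3*b3) * (sigma3 $$ (i,j) * lambda3 $$ (k,l)))
   = (\<Sum>n<4. complex_of_real (1/4) * (AA a1 a2 a3 n $$ (i,j) * BB b1 b2 b3 n $$ (k,l)))"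
proof -
  have "i \<in> {0,1}" "j \<in> {0,1}" "k \<in> {0,1,2,3}" "l \<in> {0,1,2,3}" using assms by auto
  then show ?thesis
    apply (simp only: insert_iff empty_iff simp_thms)
    apply (elim disjE)
    apply (simp_all add: lt4 sigma1_def sigma2_def sigma3_def lambda1_def lambda3_def lambda13_def
        mat_of_rows_list_def AA_def BB_def M2_def M4_def e1_def e2_def e3_def)
    apply (simp_all add: field_simps Complex_eq)
    done
qed

lemma main_eq: "rhoAB (a1*b1) (a2*b2) (a3*b3) =
   mat (2*4) (2*4) (\<lambda>rc. \<Sum>i<4. complex_of_real (1/4) * kron (AA a1 a2 a3 i) (BB b1 b2 b3 i) $$ rc)"
proof (rule eq_matI)
  have kd: "kron A B \<in> carrier_mat 8 8" if "A \<in> carrier_mat 2 2" "B \<in> carrier_mat 4 4" for A B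
    using that unfolding kron_def by (simp add: carrier_matD)
  have cr: "rhoAB (a1*b1) (a2*b2) (a3*b3) \<in> carrier_mat 8 8"
    unfolding rhoAB_def using kd s_carrier by (auto intro!: kd)
  then show "dim_row (rhoAB (a1*b1) (a2*b2) (a3*b3)) = dim_row (mat (2*4) (2*4) (\<lambda>rc. \<Sum>i<4. complex_of_real (1/4) * kron (AA a1 a2 a3 i) (BB b1 b2 b3 i) $$ rc))"
   "dim_col (rhoAB (a1*b1) (a2*b2) (a3*b3)) = dim_col (mat (2*4) (2*4) (\<lambda>rc. \<Sum>i<4. complex_of_real (1/4) * kron (AA a1 a2 a3 i) (BB b1 b2 b3 i) $$ rc))"
    by auto
  fix r c assume r: "r < dim_row (mat (2*4) (2*4) (\<lambda>rc. \<Sum>i<4. complex_of_real (1/4) * kron (AA a1 a2 a3 i) (BB b1 b2 b3 i) $$ rc))"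
    and c: "c < dim_col (mat (2*4) (2*4) (\<lambda>rc. \<Sum>i<4. complex_of_real (1/4) * kron (AA a1 a2 a3 i) (BB b1 b2 b3 i) $$ rc))"
  have r8: "r < 8" and c8: "c < 8" using r c by auto
  have d: "r div 4 < 2" "c div 4 < 2" "r mod 4 < 4" "c mod 4 < 4" using r8 c8 by auto
  have "rhoAB (a1*b1) (a2*b2) (a3*b3) $$ (r, c) =
     1/8 * (1\<^sub>m 2 $$ (r div 4, c div 4) * 1\<^sub>m 4 $$ (r mod 4, c mod 4)) + 1/4 * (complex_of_real (a1*b1) * (sigma1 $$ (r div 4, c div 4) * lambda1 $$ (r mod 4, c mod 4))
     + complex_of_real (a2*b2) * (sigma2 $$ (r div 4, c div 4) * lambda13 $$ (r mod 4, c mod 4))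
     + complex_of_real (a3*b3) * (sigma3 $$ (r div 4, c div 4) * lambda3 $$ (r mod 4, c mod 4)))"
    unfolding rhoAB_def using r8 c8 s_carrier kd[OF s_carrier(1,4)] kd[OF s_carrier(2,6)] kd[OF s_carrier(3,5)]
      kd[of "1\<^sub>m 2" "1\<^sub>m 4"]
    by (simp add: kron_idx[OF _ _ r8 c8] s_carrier del: one_mat_def)
  also have "\<dots> = (\<Sum>n<4. complex_of_real (1/4) * (AA a1 a2 a3 n $$ (r div 4, c div 4) * BB b1 b2 b3 n $$ (r mod 4, c mod 4)))"
    by (rule key[OF d])
  also have "\<dots> = mat (2*4) (2*4) (\<lambda>rc. \<Sum>i<4. complex_of_real (1/4) * kron (AA a1 a2 a3 i) (BB b1 b2 b3 i) $$ rc) $$ (r, c)"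
    using r8 c8 by (simp add: kron_idx[OF AB_carrier r8 c8])
  finally show "rhoAB (a1*b1) (a2*b2) (a3*b3) $$ (r, c) = mat (2*4) (2*4) (\<lambda>rc. \<Sum>i<4. complex_of_real (1/4) * kron (AA a1 a2 a3 i) (BB b1 b2 b3 i) $$ rc) $$ (r, c)" .
qed

lemma sgn_sq: "i < 4 \<Longrightarrow> (e1 i)^2 = 1 \<and> (e2 i)^2 = 1 \<and> (e3 i)^2 = 1"
  by (auto simp: e1_def e2_def e3_def less_Suc_eq numeral_eq_Suc)

theorem mainTheorem4:
  fixes t1 t2 t3 :: real
  assumes "\<exists>a1 a2 a3 :: real. a1 \<noteq> 0 \<and> a2 \<noteq> 0 \<and> a3 \<noteq> 0 \<and>
             a1\<^sup>2 + a2\<^sup>2 + a3\<^sup>2 \<le> 1 \<and>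
             t1\<^sup>2 / a1\<^sup>2 + t3\<^sup>2 / a3\<^sup>2 \<le> 1/4 \<and>
             t2\<^sup>2 / a2\<^sup>2 \<le> 1/4"
  shows "separable 2 4 (rhoAB t1 t2 t3)"
proof -
  obtain a1 a2 a3 :: real where h: "a1 \<noteq> 0" "a2 \<noteq> 0" "a3 \<noteq> 0"
    "a1\<^sup>2 + a2\<^sup>2 + a3\<^sup>2 \<le> 1" "t1\<^sup>2 / a1\<^sup>2 + t3\<^sup>2 / a3\<^sup>2 \<le> 1/4" "t2\<^sup>2 / a2\<^sup>2 \<le> 1/4"
    using assms by blast
  define b1 where "b1 = t1 / a1"
  define b2 where "b2 = t2 / a2"
  define b3 where "b3 = t3 / a3"
  have t: "t1 = a1*b1" "t2 = a2*b2" "t3 = a3*b3" using h(1-3) by (auto simp: b1_def b2_def b3_def)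
  have hb: "b1^2 + b3^2 \<le> 1/4" "b2^2 \<le> 1/4"
    using h(5,6) by (simp_all add: b1_def b2_def b3_def power_divide)
  have dA: "density_matrix 2 (AA a1 a2 a3 i)" if "i < 4" for i
  proof -
    have "(e1 i * a1)^2 + (e2 i * a2)^2 + (e3 i * a3)^2 \<le> 1"
      using sgn_sq[OF that] h(4) by (simp add: power_mult_distrib)
    from densA[OF this] show ?thesis by (simp add: AA_def)
  qed
  have dB: "density_matrix 4 (BB b1 b2 b3 i)" if "i < 4" for i
  proof -
    have "(e1 i * b1)^2 + (e3 i * b3)^2 \<le> 1/4" "(e2 i * b2)^2 \<le> 1/4"
      using sgn_sq[OF that] hb by (simp_all add: power_mult_distrib)
    from densB[OF this] show ?thesis by (simp add: BB_def)
  qed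
  show ?thesis
    unfolding separable_def
    apply (rule exI[of _ 4], rule exI[of _ "\<lambda>_. 1/4"], rule exI[of _ "AA a1 a2 a3"], rule exI[of _ "BB b1 b2 b3"])
    using dA dB main_eq[of a1 b1 a2 b2 a3 b3] unfolding t by (simp add: lt4)
qed

end
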